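(* Let $(X,d)$ be a compact metric space and let $f\in\mathcal{H}(X)$ be equicontinuous. If $\dim X=0$ and $X=\overline{Per(f)}$, then $f$ has the periodic shadowing property.
   Context: Equicontinuous: for every $\epsilon>0$ there is $\delta>0$ with $d(x,y)\le\delta\Rightarrow\sup_{i\in\mathbb{Z}}d(f^i(x),f^i(y))\le\epsilon$. $Per(f)$ is the set of periodic points. $f$ has the periodic shadowing property if for every $\epsilon>0$ there is $\delta>0$ such that for every $(x_i)_{i=0}^m$, $m\ge1$, with $d(f(x_i),x_{i+1})\le\delta$ for $0\le i<m$ and $x_0=x_m$, there is $p\in Per(f)$ with $d(x_i,f^i(p))\le\epsilon$ for $0\le i\le m$. *)

theory Defs
  imports "HOL-Analysis.Analysis"
begin

definition zint_iter :: "'a set \<Rightarrow> ('a \<Rightarrow> 'a) \<Rightarrow> int \<Rightarrow> 'a \<Rightarrow> 'a" where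
  "zint_iter X f i = (if 0 \<le> i then f ^^ nat i else (inv_into X f) ^^ nat (- i))"

definition equicontinuous_homeo :: "'a::metric_space set \<Rightarrow> ('a \<Rightarrow> 'a) \<Rightarrow> bool" where
  "equicontinuous_homeo X f \<longleftrightarrow>
     (\<forall>e>0. \<exists>\<delta>>0. \<forall>x\<in>X. \<forall>y\<in>X. dist x y \<le> \<delta> \<longrightarrow>
        (\<forall>i::int. dist (zint_iter X f i x) (zint_iter X f i y) \<le> e))"

definition Per :: "'a set \<Rightarrow> ('a \<Rightarrow> 'a) \<Rightarrow> 'a set" where
  "Per X f = {x \<in> X. \<exists>n>0. (f ^^ n) x = x}"

text \<open>Topological dimension zero (small inductive dimension 0):
  X is nonempty and has a base of clopen subsets.\<close>
definition dim_zero :: "'a::topological_space set \<Rightarrow> bool" where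
  "dim_zero X \<longleftrightarrow> X \<noteq> {} \<and>
     (\<forall>x\<in>X. \<forall>U. openin (top_of_set X) U \<and> x \<in> U \<longrightarrow>
        (\<exists>V. openin (top_of_set X) V \<and> closedin (top_of_set X) V \<and> x \<in> V \<and> V \<subseteq> U))"

definition periodic_shadowing :: "'a::metric_space set \<Rightarrow> ('a \<Rightarrow> 'a) \<Rightarrow> bool" where
  "periodic_shadowing X f \<longleftrightarrow>
     (\<forall>e>0. \<exists>\<delta>>0. \<forall>m::nat. \<forall>xs::nat \<Rightarrow> 'a.
        m \<ge> 1 \<and> (\<forall>i\<le>m. xs i \<in> X) \<and> (\<forall>i<m. dist (f (xs i)) (xs (Suc i)) \<le> \<delta>) \<and> xs 0 = xs m
        \<longrightarrow> (\<exists>p\<in>Per X f. \<forall>i\<le>m. dist (xs i) ((f ^^ i) p) \<le> e))"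

end

theory Submission
  imports Defs
begin

lemma clopen_cover:
  fixes X :: "'a::metric_space set"
  assumes "compact X" "dim_zero X" "e > 0"
  shows "\<exists>C. finite C \<and> X \<subseteq> \<Union>C \<and> (\<forall>U\<in>C. openin (top_of_set X) U \<and> closedin (top_of_set X) U
            \<and> (\<forall>a\<in>U. \<forall>b\<in>U. dist a b \<le> e))"
proof -
  have "\<forall>x\<in>X. \<exists>V T. openin (top_of_set X) V \<and> closedin (top_of_set X) V \<and> x \<in> V \<and> V \<subseteq> X \<inter> ball x (e/2)
          \<and> open T \<and> V = X \<inter> T"
  proof
    fix x assume x: "x \<in> X"
    have "openin (top_of_set X) (X \<inter> ball x (e/2))" by (simp add: openin_open_Int)
    moreover have "x \<in> X \<inter> ball x (e/2)" using x assms(3) by simp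
    ultimately obtain V where V: "openin (top_of_set X) V" "closedin (top_of_set X) V" "x \<in> V" "V \<subseteq> X \<inter> ball x (e/2)"
      using assms(2) x unfolding dim_zero_def by blast
    then obtain T where "open T" "V = X \<inter> T" by (meson openin_open)
    then show "\<exists>V T. openin (top_of_set X) V \<and> closedin (top_of_set X) V \<and> x \<in> V \<and> V \<subseteq> X \<inter> ball x (e/2)
          \<and> open T \<and> V = X \<inter> T" using V by blast
  qed
  then obtain V T where VT: "\<And>x. x \<in> X \<Longrightarrow> openin (top_of_set X) (V x) \<and> closedin (top_of_set X) (V x) \<and> x \<in> V x
      \<and> V x \<subseteq> X \<inter> ball x (e/2) \<and> open (T x) \<and> V x = X \<inter> T x"
    by metis
  have "X \<subseteq> (\<Union>x\<in>X. T x)" using VT by blast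
  then obtain C' where C': "C' \<subseteq> X" "finite C'" "X \<subseteq> (\<Union>x\<in>C'. T x)"
    using compactE_image[OF assms(1), of X T] VT by metis
  have "X \<subseteq> \<Union>(V ` C')" using C' VT by blast
  moreover have "\<forall>U\<in>V ` C'. openin (top_of_set X) U \<and> closedin (top_of_set X) U
            \<and> (\<forall>a\<in>U. \<forall>b\<in>U. dist a b \<le> e)"
  proof
    fix U assume "U \<in> V ` C'"
    then obtain x where x: "x \<in> X" "U = V x" using C' by blast
    have "\<forall>a\<in>U. \<forall>b\<in>U. dist a b \<le> e"
    proof (intro ballI)
      fix a b assume "a \<in> U" "b \<in> U"
      then have "dist x a < e/2" "dist x b < e/2" using VT[OF x(1)] x(2) by auto
      then show "dist a b \<le> e" using dist_triangle[of a b x] by (simp add: dist_commute)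
    qed
    then show "openin (top_of_set X) U \<and> closedin (top_of_set X) U \<and> (\<forall>a\<in>U. \<forall>b\<in>U. dist a b \<le> e)"
      using VT[OF x(1)] x(2) by blast
  qed
  ultimately show ?thesis using C' by blast
qed

lemma sep_one:
  fixes X :: "'a::metric_space set"
  assumes "compact X" "openin (top_of_set X) U" "closedin (top_of_set X) U"
  shows "\<exists>\<eta>>0. \<forall>x\<in>X. \<forall>y\<in>X. dist x y < \<eta> \<longrightarrow> (x \<in> U \<longleftrightarrow> y \<in> U)"
proof -
  obtain T where T: "open T" "U = X \<inter> T" using assms(2) by (meson openin_open)
  have "openin (top_of_set X) (topspace (top_of_set X) - U)"
    by (rule openin_diff[OF openin_topspace assms(3)])
  then have "openin (top_of_set X) (X - U)" by simp
  then obtain T' where T': "open T'" "X - U = X \<inter> T'" by (meson openin_open)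
  have TU: "\<And>x. x \<in> X \<Longrightarrow> x \<in> U \<longleftrightarrow> x \<in> T" using T(2) by blast
  have TU': "\<And>x. x \<in> X \<Longrightarrow> x \<notin> U \<longleftrightarrow> x \<in> T'" using T'(2) by blast
  have "X \<subseteq> \<Union>{T, T'}" using TU TU' by blast
  then obtain \<epsilon> where e: "0 < \<epsilon>" "\<And>x. x \<in> X \<Longrightarrow> \<exists>G \<in> {T, T'}. ball x \<epsilon> \<subseteq> G"
  proof (rule Heine_Borel_lemma[OF assms(1)])
    show "\<And>G. G \<in> {T, T'} \<Longrightarrow> open G" using T T' by blast
  qed blast+
  have "\<forall>x\<in>X. \<forall>y\<in>X. dist x y < \<epsilon> \<longrightarrow> (x \<in> U \<longleftrightarrow> y \<in> U)"
  proof (intro ballI impI)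
    fix x y assume xy: "x \<in> X" "y \<in> X" "dist x y < \<epsilon>"
    then have "y \<in> ball x \<epsilon>" "x \<in> ball x \<epsilon>" using e(1) by auto
    obtain G where G: "G \<in> {T, T'}" "ball x \<epsilon> \<subseteq> G" using e(2)[OF xy(1)] by blast
    then have "x \<in> G" "y \<in> G" using \<open>y \<in> ball x \<epsilon>\<close> \<open>x \<in> ball x \<epsilon>\<close> by auto
    then show "x \<in> U \<longleftrightarrow> y \<in> U" using G(1) TU[OF xy(1)] TU[OF xy(2)] TU'[OF xy(1)] TU'[OF xy(2)] by auto
  qed
  then show ?thesis using e(1) by blast
qed

lemma sep_all:
  fixes X :: "'a::metric_space set"
  assumes "compact X" "finite C" "\<forall>U\<in>C. openin (top_of_set X) U \<and> closedin (top_of_set X) U"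
  shows "\<exists>\<eta>>0. \<forall>x\<in>X. \<forall>y\<in>X. dist x y < \<eta> \<longrightarrow> (\<forall>U\<in>C. x \<in> U \<longleftrightarrow> y \<in> U)"
  using assms(2,3)
proof (induction C rule: finite_induct)
  case empty
  show ?case by (rule exI[of _ 1]) simp
next
  case (insert U C)
  have pr: "\<forall>U\<in>C. openin (top_of_set X) U \<and> closedin (top_of_set X) U" using insert.prems by simp
  have pU: "openin (top_of_set X) U" "closedin (top_of_set X) U" using insert.prems by simp_all
  obtain \<eta>1 where h1: "\<eta>1 > 0" "\<forall>x\<in>X. \<forall>y\<in>X. dist x y < \<eta>1 \<longrightarrow> (\<forall>U\<in>C. x \<in> U \<longleftrightarrow> y \<in> U)"
    using insert.IH[OF pr] by (elim exE conjE)
  obtain \<eta>2 where h2: "\<eta>2 > 0" "\<forall>x\<in>X. \<forall>y\<in>X. dist x y < \<eta>2 \<longrightarrow> (x \<in> U \<longleftrightarrow> y \<in> U)"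
    using sep_one[OF assms(1) pU] by (elim exE conjE)
  have p1: "min \<eta>1 \<eta>2 > 0" using h1(1) h2(1) by simp
  have p2: "\<forall>x\<in>X. \<forall>y\<in>X. dist x y < min \<eta>1 \<eta>2 \<longrightarrow> (\<forall>V\<in>insert U C. x \<in> V \<longleftrightarrow> y \<in> V)"
  proof (intro ballI impI)
    fix x y V assume xy: "x \<in> X" "y \<in> X" "dist x y < min \<eta>1 \<eta>2" and V: "V \<in> insert U C"
    have d1: "dist x y < \<eta>1" "dist x y < \<eta>2" using xy(3) by auto
    have a: "\<forall>U\<in>C. x \<in> U \<longleftrightarrow> y \<in> U" using h1(2) xy(1,2) d1(1) by blast
    have b: "x \<in> U \<longleftrightarrow> y \<in> U" using h2(2) xy(1,2) d1(2) by blast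
    show "x \<in> V \<longleftrightarrow> y \<in> V" using V a b by blast
  qed
  show ?case using p1 p2 by (intro exI[of _ "min \<eta>1 \<eta>2"] conjI)
qed

theorem lemma5p1:
  fixes X :: "'a::metric_space set" and f :: "'a \<Rightarrow> 'a"
  assumes "compact X"
    and "\<exists>g. homeomorphism X X f g"
    and "equicontinuous_homeo X f"
    and "dim_zero X"
    and "closure (Per X f) = X"
  shows "periodic_shadowing X f"
  unfolding periodic_shadowing_def
proof (intro allI impI)
  fix e :: real assume "e > 0"
  have fX: "\<And>x. x \<in> X \<Longrightarrow> f x \<in> X" using assms(2) by (auto simp: homeomorphism_def)
  have fnX: "\<And>x n. x \<in> X \<Longrightarrow> (f ^^ n) x \<in> X"
  proof -
    fix x n assume "x \<in> X" then show "(f ^^ n) x \<in> X" by (induction n) (auto intro: fX)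
  qed
  obtain C where C: "finite C" "X \<subseteq> \<Union>C" "\<forall>U\<in>C. openin (top_of_set X) U \<and> closedin (top_of_set X) U
            \<and> (\<forall>a\<in>U. \<forall>b\<in>U. dist a b \<le> e)"
    using clopen_cover[OF assms(1) assms(4) \<open>e > 0\<close>] by blast
  obtain \<eta> where eta: "\<eta> > 0" "\<forall>x\<in>X. \<forall>y\<in>X. dist x y < \<eta> \<longrightarrow> (\<forall>U\<in>C. x \<in> U \<longleftrightarrow> y \<in> U)"
    using sep_all[OF assms(1) C(1)] C(3) by blast
  obtain \<delta> where d: "\<delta> > 0" "\<forall>x\<in>X. \<forall>y\<in>X. dist x y \<le> \<delta> \<longrightarrow>
        (\<forall>i::int. dist (zint_iter X f i x) (zint_iter X f i y) \<le> \<eta>/2)"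
    using assms(3) eta(1) unfolding equicontinuous_homeo_def
    by (drule_tac x="\<eta>/2" in spec) (erule impE, simp, elim exE conjE, blast)
  define S where "S x y \<longleftrightarrow> (\<forall>n. \<forall>U\<in>C. (f ^^ n) x \<in> U \<longleftrightarrow> (f ^^ n) y \<in> U)" for x y
  have close: "S x y" if "x \<in> X" "y \<in> X" "dist x y \<le> \<delta>" for x y
    unfolding S_def
  proof (intro allI)
    fix n
    have "dist (zint_iter X f (int n) x) (zint_iter X f (int n) y) \<le> \<eta>/2" using d that by blast
    then have "dist ((f ^^ n) x) ((f ^^ n) y) < \<eta>" using eta(1) by (simp add: zint_iter_def)
    then show "\<forall>U\<in>C. (f ^^ n) x \<in> U \<longleftrightarrow> (f ^^ n) y \<in> U" using eta(2) fnX that by blast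
  qed
  have Sf: "S (f x) (f y)" if "S x y" for x y
    unfolding S_def
  proof (intro allI)
    fix n
    have e1: "(f ^^ n) (f x) = (f ^^ Suc n) x" "(f ^^ n) (f y) = (f ^^ Suc n) y"
      by (simp_all only: funpow_Suc_right o_apply)
    show "\<forall>U\<in>C. (f ^^ n) (f x) \<in> U \<longleftrightarrow> (f ^^ n) (f y) \<in> U"
      unfolding e1 using that unfolding S_def by blast
  qed
  have Strans: "S x z" if "S x y" "S y z" for x y z
    using that unfolding S_def by blast
  show "\<exists>\<delta>>0. \<forall>m xs. 1 \<le> m \<and> (\<forall>i\<le>m. xs i \<in> X) \<and> (\<forall>i<m. dist (f (xs i)) (xs (Suc i)) \<le> \<delta>) \<and> xs 0 = xs m \<longrightarrow>
          (\<exists>p\<in>Per X f. \<forall>i\<le>m. dist (xs i) ((f ^^ i) p) \<le> e)"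
  proof (intro exI[of _ \<delta>] conjI d(1) allI impI)
    fix m and xs :: "nat \<Rightarrow> 'a"
    assume H: "1 \<le> m \<and> (\<forall>i\<le>m. xs i \<in> X) \<and> (\<forall>i<m. dist (f (xs i)) (xs (Suc i)) \<le> \<delta>) \<and> xs 0 = xs m"
    have "xs 0 \<in> X" using H by blast
    then have "xs 0 \<in> closure (Per X f)" using assms(5) by simp
    then obtain p where p: "p \<in> Per X f" "dist (xs 0) p < \<delta>" using closure_approachableD d(1) by blast
    have pX: "p \<in> X" using p(1) by (simp add: Per_def)
    have Si: "S ((f ^^ i) p) (xs i)" if "i \<le> m" for i
      using that
    proof (induction i)
      case 0
      have "dist p (xs 0) \<le> \<delta>" using p(2) by (simp add: dist_commute)
      moreover have "xs 0 \<in> X" using H by blast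
      ultimately show ?case using close[of p "xs 0"] pX by simp
    next
      case (Suc i)
      then have "S ((f ^^ i) p) (xs i)" by simp
      then have "S (f ((f ^^ i) p)) (f (xs i))" by (rule Sf)
      then have "S ((f ^^ Suc i) p) (f (xs i))" by simp
      moreover have "S (f (xs i)) (xs (Suc i))"
      proof (rule close)
        have "i < m" "i \<le> m" "Suc i \<le> m" using Suc.prems by auto
        then show "f (xs i) \<in> X" "xs (Suc i) \<in> X" "dist (f (xs i)) (xs (Suc i)) \<le> \<delta>"
          using H fX by blast+
      qed
      ultimately show ?case by (rule Strans)
    qed
    have "\<forall>i\<le>m. dist (xs i) ((f ^^ i) p) \<le> e"
    proof (intro allI impI)
      fix i assume i: "i \<le> m"
      have HX: "\<forall>i\<le>m. xs i \<in> X" using H by (elim conjE)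
      have "xs i \<in> X" using HX i by simp
      then have "xs i \<in> \<Union>C" by (rule subsetD[OF C(2)])
      then obtain U where U: "U \<in> C" "xs i \<in> U" by (rule UnionE)
      have "\<forall>U\<in>C. (f ^^ 0) ((f ^^ i) p) \<in> U \<longleftrightarrow> (f ^^ 0) (xs i) \<in> U"
        using Si[OF i] unfolding S_def by (rule spec)
      then have "(f ^^ i) p \<in> U" using U by simp
      moreover have "\<forall>a\<in>U. \<forall>b\<in>U. dist a b \<le> e" using U(1) C(3) by simp
      ultimately show "dist (xs i) ((f ^^ i) p) \<le> e" using U(2) by simp
    qed
    then show "\<exists>p\<in>Per X f. \<forall>i\<le>m. dist (xs i) ((f ^^ i) p) \<le> e" using p(1) by (intro bexI)
  qed
qed

end
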